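(* Let $t_1,t_{1'},t_2,t_{2'},t_0,t_\infty\in\mathbb{R}$ satisfy $t_1\neq t_2$; $t_0\neq t_\infty,t_1,t_{1'},t_2,t_{2'}$; $t_\infty\neq t_1,t_2$; and \[ \frac{(t_\infty - t_0)(t_1 - t_0)}{(t_1-t_\infty)(t_{1'}-t_0)} = \frac{(t_\infty - t_0)(t_2 - t_0)}{(t_2-t_\infty)(t_{2'}-t_0)}. \] Then there is a constant $A$ depending only on $d$ such that for every set of lines $G$, \[ |G|^4 \leq A\, D_{t_1,t_2}D_{t_0,t_\infty}D_{t_{1'},t_0}D_{t_{2'},t_0}\,\mathcal{M}(G)\sup_{t\in\{t_\infty,t_0,t_1,t_{1'},t_2,t_{2'}\}}\mathcal{L}^{d-1}(\pi_t(G))^7. \]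
   Context: Let $e_1,\ldots,e_d$ be an orthonormal basis of $\mathbb{R}^d$, $H=\mathrm{span}(e_1,\ldots,e_{d-1})\cong\mathbb{R}^{d-1}$, and $H_t=H+te_d$ for $t\in\mathbb{R}$. $\mathcal{L}^m$ denotes Lebesgue measure on $\mathbb{R}^m$. A "set of lines" $G$ is a collection of lines in $\mathbb{R}^d$ each meeting $H$ in exactly one point. For such a line $g$, $\pi_t(g)=H_t\cap g$ (viewed as a point of $H$ after subtracting $te_d$), and $\pi_t(G)=\{\pi_t(g):g\in G\}$. Set $G_X=\{(\xi,x)\in H\times H: \exists g\in G \text{ with } x,\ x+\xi+e_d\in g\}$, $|G|=\mathcal{L}^{2(d-1)}(G_X)$, and $\mathcal{M}(G)=\sup_{\xi\in H}\mathcal{L}^{d-1}(\{x:(\xi,x)\in G_X\})$. For $t\ne t'$, $D_{t,t'}=|t-t'|^{-(d-1)}$. Throughout, sets of lines are assumed to be such that the relevant sets are measurable and $|G|$, $\mathcal{M}(G)$ and all $\mathcal{L}^{d-1}(\pi_t(G))$ are finite. *)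

theory Defs
  imports "HOL-Analysis.Analysis"
begin

(* R^d is modelled as H \<times> R with H = real^'n, so d - 1 = CARD('n) (hence d \<ge> 2).
   The second component is the e_d coordinate; H_t = {(x,t). x \<in> H}. *)

definition is_line :: "'a::euclidean_space set \<Rightarrow> bool" where
  "is_line L \<longleftrightarrow> affine L \<and> aff_dim L = 1"

definition set_of_lines :: "((real^'n) \<times> real) set set \<Rightarrow> bool" where
  "set_of_lines G \<longleftrightarrow> (\<forall>g\<in>G. is_line g \<and> (\<exists>!x. (x, 0) \<in> g))"

definition proj_line :: "real \<Rightarrow> ((real^'n) \<times> real) set \<Rightarrow> real^'n" where
  "proj_line t g = (THE x. (x, t) \<in> g)"

definition proj_lines :: "real \<Rightarrow> ((real^'n) \<times> real) set set \<Rightarrow> (real^'n) set" where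
  "proj_lines t G = proj_line t ` G"

definition lines_X :: "((real^'n) \<times> real) set set \<Rightarrow> ((real^'n) \<times> (real^'n)) set" where
  "lines_X G = {(\<xi>, x). \<exists>g\<in>G. (x, 0) \<in> g \<and> (x + \<xi>, 1) \<in> g}"

definition lines_fibre :: "((real^'n) \<times> real) set set \<Rightarrow> real^'n \<Rightarrow> (real^'n) set" where
  "lines_fibre G \<xi> = {x. (\<xi>, x) \<in> lines_X G}"

definition lines_size :: "((real^'n) \<times> real) set set \<Rightarrow> real" where
  "lines_size G = measure lebesgue (lines_X G)"

text \<open>M(G) = sup over xi of L^{d-1} of the fibre (as an extended real, then converted;
  it is assumed finite in the theorem).\<close>
definition lines_M_ennreal :: "((real^'n) \<times> real) set set \<Rightarrow> ennreal" where
  "lines_M_ennreal G = (SUP \<xi>. emeasure lebesgue (lines_fibre G \<xi>))"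

definition lines_M :: "((real^'n) \<times> real) set set \<Rightarrow> real" where
  "lines_M G = enn2real (lines_M_ennreal G)"

definition Dcoef :: "nat \<Rightarrow> real \<Rightarrow> real \<Rightarrow> real" where
  "Dcoef m t t' = 1 / \<bar>t - t'\<bar> ^ m"

end

theory Submission
  imports Defs
begin

lemma nn_affine:
  fixes f :: "'a::euclidean_space \<Rightarrow> ennreal" and t :: 'a
  assumes [measurable]: "f \<in> borel_measurable borel" and c: "c \<noteq> 0"
  shows "(\<integral>\<^sup>+x. f x \<partial>lborel) = ennreal (\<bar>c\<bar> ^ DIM('a)) * (\<integral>\<^sup>+x. f (t + c *\<^sub>R x) \<partial>lborel)"
  by (subst lborel_affine[OF c, of t])
     (simp add: nn_integral_density nn_integral_distr nn_integral_cmult)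

lemma nn_swap:
  fixes f :: "'a::euclidean_space \<Rightarrow> 'b::euclidean_space \<Rightarrow> ennreal"
  assumes "(\<lambda>p. f (fst p) (snd p)) \<in> borel_measurable (borel \<Otimes>\<^sub>M borel)"
  shows "(\<integral>\<^sup>+x. \<integral>\<^sup>+y. f x y \<partial>lborel \<partial>lborel) = (\<integral>\<^sup>+y. \<integral>\<^sup>+x. f x y \<partial>lborel \<partial>lborel)"
proof -
  have "case_prod f \<in> borel_measurable (lborel \<Otimes>\<^sub>M lborel)"
    using assms by (simp add: split_beta' measurable_cong_sets[OF sets_pair_measure_cong[OF sets_lborel sets_lborel] refl])
  from lborel_pair.Fubini'[OF this] show ?thesis by simp
qed

lemma cs_ind:
  fixes f :: "'a::euclidean_space \<Rightarrow> ennreal"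
  assumes [measurable]: "f \<in> borel_measurable borel" "Q \<in> sets borel"
  and z: "\<And>x. x \<notin> Q \<Longrightarrow> f x = 0"
  shows "(\<integral>\<^sup>+x. f x \<partial>lborel)^2 \<le> emeasure lborel Q * (\<integral>\<^sup>+x. f x ^ 2 \<partial>lborel)"
proof -
  have "(\<integral>\<^sup>+x. f x \<partial>lborel) = (\<integral>\<^sup>+x. f x * indicator Q x \<partial>lborel)"
    by (intro nn_integral_cong) (auto simp: z split: split_indicator)
  also have "(\<dots>)^2 \<le> (\<integral>\<^sup>+x. f x ^ 2 \<partial>lborel) * (\<integral>\<^sup>+x. (indicator Q x :: ennreal) ^ 2 \<partial>lborel)"
    by (rule Cauchy_Schwarz_nn_integral) auto
  also have "(\<integral>\<^sup>+x. (indicator Q x :: ennreal) ^ 2 \<partial>lborel) = emeasure lborel Q"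
  proof -
    have "(\<lambda>x. (indicator Q x :: ennreal)^2) = indicator Q" by (auto simp: fun_eq_iff split: split_indicator)
    then show ?thesis by simp
  qed
  finally show ?thesis by (simp add: mult.commute)
qed

lemma vecid:
  fixes y \<alpha> \<beta> \<gamma> :: "real^'n" and A B B' C :: real
  shows "((((- B) *\<^sub>R ((y - A *\<^sub>R y) + A *\<^sub>R \<alpha>) + B' *\<^sub>R \<beta>)
     - C *\<^sub>R ((- B) *\<^sub>R ((y - A *\<^sub>R y) + A *\<^sub>R \<alpha>) + B' *\<^sub>R \<beta>)) + C *\<^sub>R \<gamma>)
   = ((((- B) *\<^sub>R ((0 - A *\<^sub>R 0) + A *\<^sub>R \<alpha>) + B' *\<^sub>R \<beta>)
     - C *\<^sub>R ((- B) *\<^sub>R ((0 - A *\<^sub>R 0) + A *\<^sub>R \<alpha>) + B' *\<^sub>R \<beta>)) + C *\<^sub>R \<gamma>)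
     + ((1 - C) * (- B) * (1 - A)) *\<^sub>R y"
  by (simp add: vec_eq_iff algebra_simps)

lemma kappa_gen:
  fixes D E F G H K :: real
  assumes "D \<noteq> 0" "D - E \<noteq> 0" "F \<noteq> 0" "G \<noteq> 0" "H \<noteq> 0"
  and "(G - F) * E * (H - D) = - (G * (D - E) * H)"
  shows "(1 - 1/(G/F)) * (-((E/D)/(1-E/D))) * (1 - 1/(H/D)) = 1"
proof -
  have f1: "1 - 1/(G/F) = (G - F)/G" using assms by (simp add: field_simps)
  have f2: "(E/D)/(1-E/D) = E/(D-E)" using assms by (simp add: field_simps)
  have f3: "1 - 1/(H/D) = (H-D)/H" using assms by (simp add: field_simps)
  show ?thesis unfolding f1 f2 f3 using assms by (simp add: field_simps)
qed

lemma kappa: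
  fixes t0 t1 t1' t2 t2' ti :: real
  assumes "t1 \<noteq> t0" "t1' \<noteq> t0" "ti \<noteq> t0" "t2 \<noteq> t1" "t2' \<noteq> t0"
  and key: "(t2'-t1')*(t2-t0)*(ti-t1) + (t2'-t0)*(t1-t2)*(ti-t0) = 0"
  shows "(1 - 1/((t2'-t0)/(t1'-t0))) * (-(((t2-t0)/(t1-t0))/(1-(t2-t0)/(t1-t0)))) * (1 - 1/((ti-t0)/(t1-t0))) = 1"
  apply (rule kappa_gen)
  using assms by (auto simp: algebra_simps)

lemma keyder:
  fixes t0 t1 t1' t2 t2' ti :: real
  assumes "t1 \<noteq> t2" "t0 \<noteq> ti" "t0 \<noteq> t1" "t0 \<noteq> t1'" "t0 \<noteq> t2" "t0 \<noteq> t2'" "ti \<noteq> t1" "ti \<noteq> t2"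
  and e: "((ti - t0) * (t1 - t0)) / ((t1 - ti) * (t1' - t0)) = ((ti - t0) * (t2 - t0)) / ((t2 - ti) * (t2' - t0))"
  shows "(t2'-t1')*(t2-t0)*(ti-t1) + (t2'-t0)*(t1-t2)*(ti-t0) = 0"
proof -
  have nz: "(t1 - ti) * (t1' - t0) \<noteq> 0" "(t2 - ti) * (t2' - t0) \<noteq> 0" "ti - t0 \<noteq> 0" using assms by auto
  from e have "((ti - t0) * (t1 - t0)) * ((t2 - ti) * (t2' - t0)) = ((ti - t0) * (t2 - t0)) * ((t1 - ti) * (t1' - t0))"
    using frac_eq_eq[OF nz(1,2)] by simp
  then have "(ti - t0) * ((t1 - t0) * ((t2 - ti) * (t2' - t0))) = (ti - t0) * ((t2 - t0) * ((t1 - ti) * (t1' - t0)))"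
    by (simp only: mult_ac)
  then have "(t1 - t0) * ((t2 - ti) * (t2' - t0)) = (t2 - t0) * ((t1 - ti) * (t1' - t0))" using nz(3) by simp
  then show ?thesis by algebra
qed

abbreviation lf :: "real \<Rightarrow> real \<Rightarrow> real^'n \<Rightarrow> real^'n \<Rightarrow> (real^'n) \<times> (real^'n)" where
  "lf t0 s y u \<equiv> ((1/(s-t0)) *\<^sub>R (u - y), y - t0 *\<^sub>R ((1/(s-t0)) *\<^sub>R (u - y)))"

context
  fixes S :: "((real^'n) \<times> (real^'n)) set" and Q :: "real \<Rightarrow> (real^'n) set" and Mv :: ennreal
  assumes S_meas[measurable]: "S \<in> sets (borel \<Otimes>\<^sub>M borel)"
  and Q_meas[measurable]: "\<And>t. Q t \<in> sets borel"
  and SQ: "\<And>\<xi> x t. (\<xi>,x) \<in> S \<Longrightarrow> x + t *\<^sub>R \<xi> \<in> Q t"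
  and SM: "\<And>\<xi>. (\<integral>\<^sup>+x. indicator S (\<xi>,x) \<partial>lborel) \<le> Mv"
begin

lemma fibre_shift:
  "(\<integral>\<^sup>+x. indicator S (\<xi>,x) \<partial>lborel) = (\<integral>\<^sup>+y. indicator S (\<xi>, y - t0 *\<^sub>R \<xi>) \<partial>lborel :: ennreal)"
  by (subst nn_affine[where c=1 and t="- t0 *\<^sub>R \<xi>"]) (auto simp: algebra_simps)

lemma lf_pt:
  assumes "s \<noteq> t0" "indicator S (lf t0 s y u) \<noteq> (0::ennreal)"
  shows "y + ((r - t0) / (s - t0)) *\<^sub>R (u - y) \<in> Q r"
proof -
  have "lf t0 s y u \<in> S" using assms(2) by (auto split: split_indicator_asm)
  from SQ[OF this, of r]
  have "y - t0 *\<^sub>R ((1/(s-t0)) *\<^sub>R (u - y)) + r *\<^sub>R ((1/(s-t0)) *\<^sub>R (u - y)) \<in> Q r" .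
  moreover have "y - t0 *\<^sub>R ((1/(s-t0)) *\<^sub>R (u - y)) + r *\<^sub>R ((1/(s-t0)) *\<^sub>R (u - y)) = y + ((r - t0) / (s - t0)) *\<^sub>R (u - y)"
    using assms(1) by (simp add: vec_eq_iff divide_simps) (simp add: algebra_simps)
  ultimately show ?thesis by metis
qed

lemma lf_ind_le:
  assumes "s \<noteq> t0"
  shows "(indicator S (lf t0 s y u) :: ennreal) \<le> indicator (Q r) (y + ((r - t0) / (s - t0)) *\<^sub>R (u - y))"
proof (cases "indicator S (lf t0 s y u) = (0::ennreal)")
  case False
  then show ?thesis using lf_pt[OF assms False] by (simp split: split_indicator)
qed simp

lemma stepA:
  assumes d1: "t1 \<noteq> t0" and d1': "t1' \<noteq> t0"
  shows "(\<integral>\<^sup>+p. indicator S p \<partial>(lborel \<Otimes>\<^sub>M lborel))^2 \<le> emeasure lborel (Q t0) *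
     ennreal (\<bar>1/(t1-t0)\<bar>^CARD('n) * \<bar>1/(t1'-t0)\<bar>^CARD('n)) *
     (\<integral>\<^sup>+u. \<integral>\<^sup>+v. \<integral>\<^sup>+y. indicator S (lf t0 t1 y u) * indicator S (lf t0 t1' y v) \<partial>lborel \<partial>lborel \<partial>lborel)"
proof -
  define f where "f y = (\<integral>\<^sup>+\<xi>. indicator S (\<xi>, y - t0 *\<^sub>R \<xi>) \<partial>lborel :: ennreal)" for y :: "real^'n"
  have f_meas[measurable]: "f \<in> borel_measurable borel" unfolding f_def by measurable
  have "(\<integral>\<^sup>+p. indicator S p \<partial>(lborel \<Otimes>\<^sub>M lborel)) = (\<integral>\<^sup>+\<xi>. \<integral>\<^sup>+x. indicator S (\<xi>,x) \<partial>lborel \<partial>lborel)"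
    by (rule lborel.nn_integral_fst[of "indicator S" lborel, symmetric]) measurable
  also have "\<dots> = (\<integral>\<^sup>+\<xi>. \<integral>\<^sup>+y. indicator S (\<xi>, y - t0 *\<^sub>R \<xi>) \<partial>lborel \<partial>lborel)"
    by (simp add: fibre_shift[of _ t0])
  also have "\<dots> = (\<integral>\<^sup>+y. f y \<partial>lborel)"
    unfolding f_def by (rule nn_swap) measurable
  finally have e1: "(\<integral>\<^sup>+p. indicator S p \<partial>(lborel \<Otimes>\<^sub>M lborel)) = (\<integral>\<^sup>+y. f y \<partial>lborel)" .
  have fz: "f y = 0" if "y \<notin> Q t0" for y
  proof -
    have "indicator S (\<xi>, y - t0 *\<^sub>R \<xi>) = (0::ennreal)" for \<xi>
      using SQ[of \<xi> "y - t0 *\<^sub>R \<xi>" t0] that by (auto split: split_indicator)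
    then show ?thesis unfolding f_def by simp
  qed
  have cs: "(\<integral>\<^sup>+y. f y \<partial>lborel)^2 \<le> emeasure lborel (Q t0) * (\<integral>\<^sup>+y. f y ^ 2 \<partial>lborel)"
    by (rule cs_ind) (auto simp: fz)
  have fs: "f y = ennreal (\<bar>1/(s-t0)\<bar>^CARD('n)) * (\<integral>\<^sup>+u. indicator S (lf t0 s y u) \<partial>lborel)" if "s \<noteq> t0" for s y
    unfolding f_def
    apply (subst nn_affine[where c="1/(s-t0)" and t="- (1/(s-t0)) *\<^sub>R y"])
    using that by (auto simp: algebra_simps)
  have f2: "f y ^ 2 = ennreal (\<bar>1/(t1-t0)\<bar>^CARD('n) * \<bar>1/(t1'-t0)\<bar>^CARD('n)) *
     (\<integral>\<^sup>+u. \<integral>\<^sup>+v. indicator S (lf t0 t1 y u) * indicator S (lf t0 t1' y v) \<partial>lborel \<partial>lborel)" for y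
  proof -
    have "f y ^ 2 = f y * f y" by (simp add: power2_eq_square)
    also have "\<dots> = ennreal (\<bar>1/(t1-t0)\<bar>^CARD('n)) * (\<integral>\<^sup>+u. indicator S (lf t0 t1 y u) \<partial>lborel) *
       (ennreal (\<bar>1/(t1'-t0)\<bar>^CARD('n)) * (\<integral>\<^sup>+v. indicator S (lf t0 t1' y v) \<partial>lborel))"
      using fs[OF d1, of y] fs[OF d1', of y] by simp
    also have "(\<integral>\<^sup>+u. indicator S (lf t0 t1 y u) \<partial>lborel) * (\<integral>\<^sup>+v. indicator S (lf t0 t1' y v) \<partial>lborel)
        = (\<integral>\<^sup>+u. \<integral>\<^sup>+v. indicator S (lf t0 t1 y u) * indicator S (lf t0 t1' y v) \<partial>lborel \<partial>lborel)"
      by (subst nn_integral_multc[symmetric], measurable)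
         (intro nn_integral_cong, subst nn_integral_cmult[symmetric], auto)
    ultimately show ?thesis by (simp add: ennreal_mult' mult_ac)
  qed
  have "(\<integral>\<^sup>+y. f y ^ 2 \<partial>lborel) = ennreal (\<bar>1/(t1-t0)\<bar>^CARD('n) * \<bar>1/(t1'-t0)\<bar>^CARD('n)) *
     (\<integral>\<^sup>+y. \<integral>\<^sup>+u. \<integral>\<^sup>+v. indicator S (lf t0 t1 y u) * indicator S (lf t0 t1' y v) \<partial>lborel \<partial>lborel \<partial>lborel)"
    by (simp add: f2 nn_integral_cmult)
  also have "(\<integral>\<^sup>+y. \<integral>\<^sup>+u. \<integral>\<^sup>+v. indicator S (lf t0 t1 y u) * indicator S (lf t0 t1' y v) \<partial>lborel \<partial>lborel \<partial>lborel)
     = (\<integral>\<^sup>+u. \<integral>\<^sup>+y. \<integral>\<^sup>+v. indicator S (lf t0 t1 y u) * indicator S (lf t0 t1' y v) \<partial>lborel \<partial>lborel \<partial>lborel)"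
    by (rule nn_swap) measurable
  also have "\<dots> = (\<integral>\<^sup>+u. \<integral>\<^sup>+v. \<integral>\<^sup>+y. indicator S (lf t0 t1 y u) * indicator S (lf t0 t1' y v) \<partial>lborel \<partial>lborel \<partial>lborel)"
    by (intro nn_integral_cong nn_swap) measurable
  finally show ?thesis using cs unfolding e1 by (simp add: mult_ac)
qed

lemma lf_self:
  assumes "s \<noteq> t0" "indicator S (lf t0 s y u) \<noteq> (0::ennreal)"
  shows "u \<in> Q s"
  using lf_pt[OF assms, of s] assms(1) by simp

lemma stepB:
  assumes d1: "t1 \<noteq> t0" and d1': "t1' \<noteq> t0"
  shows "(\<integral>\<^sup>+u. \<integral>\<^sup>+v. \<integral>\<^sup>+y. indicator S (lf t0 t1 y u) * indicator S (lf t0 t1' y v) \<partial>lborel \<partial>lborel \<partial>lborel)^2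
    \<le> emeasure lborel (Q t1) * emeasure lborel (Q t1') *
     (\<integral>\<^sup>+u. \<integral>\<^sup>+v. \<integral>\<^sup>+y. \<integral>\<^sup>+z. (indicator S (lf t0 t1 y u) * indicator S (lf t0 t1' y v)) *
        (indicator S (lf t0 t1 z u) * indicator S (lf t0 t1' z v)) \<partial>lborel \<partial>lborel \<partial>lborel \<partial>lborel)"
proof -
  define J where "J y u v = (indicator S (lf t0 t1 y u) * indicator S (lf t0 t1' y v) :: ennreal)" for y u v :: "real^'n"
  define k where "k u v = (\<integral>\<^sup>+y. J y u v \<partial>lborel)" for u v
  define g where "g u = (\<integral>\<^sup>+v. k u v \<partial>lborel)" for u
  have [measurable]: "(\<lambda>p. k (fst p) (snd p)) \<in> borel_measurable (borel \<Otimes>\<^sub>M borel)"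
    unfolding k_def J_def by measurable
  have [measurable]: "k u \<in> borel_measurable borel" for u
    unfolding k_def J_def by measurable
  have [measurable]: "g \<in> borel_measurable borel"
    unfolding g_def k_def J_def by measurable
  have kz1: "k u v = 0" if "u \<notin> Q t1" for u v
  proof -
    have "J y u v = 0" for y using lf_self[OF d1, where y=y and u=u] that unfolding J_def by auto
    then show ?thesis unfolding k_def by simp
  qed
  have kz2: "k u v = 0" if "v \<notin> Q t1'" for u v
  proof -
    have "J y u v = 0" for y using lf_self[OF d1', where y=y and u=v] that unfolding J_def by auto
    then show ?thesis unfolding k_def by simp
  qed
  have gz: "g u = 0" if "u \<notin> Q t1" for u
  proof -
    have "k u = (\<lambda>_. 0)" using kz1[OF that] by auto
    then show ?thesis unfolding g_def by simp
  qed
  have k2: "k u v ^ 2 = (\<integral>\<^sup>+y. \<integral>\<^sup>+z. J y u v * J z u v \<partial>lborel \<partial>lborel)" for u v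
  proof -
    have "k u v ^ 2 = k u v * k u v" by (simp add: power2_eq_square)
    also have "\<dots> = (\<integral>\<^sup>+y. \<integral>\<^sup>+z. J y u v * J z u v \<partial>lborel \<partial>lborel)"
      unfolding k_def J_def
      by (subst nn_integral_multc[symmetric], measurable)
         (intro nn_integral_cong, subst nn_integral_cmult[symmetric], auto)
    finally show ?thesis .
  qed
  have g2: "g u ^ 2 \<le> emeasure lborel (Q t1') * (\<integral>\<^sup>+v. k u v ^ 2 \<partial>lborel)" for u
    unfolding g_def by (rule cs_ind) (auto simp: kz2)
  have "(\<integral>\<^sup>+u. g u \<partial>lborel)^2 \<le> emeasure lborel (Q t1) * (\<integral>\<^sup>+u. g u ^ 2 \<partial>lborel)"
    by (rule cs_ind) (auto simp: gz)
  also have "(\<integral>\<^sup>+u. g u ^ 2 \<partial>lborel) \<le> (\<integral>\<^sup>+u. emeasure lborel (Q t1') * (\<integral>\<^sup>+v. k u v ^ 2 \<partial>lborel) \<partial>lborel)"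
    by (intro nn_integral_mono g2)
  also have "\<dots> = emeasure lborel (Q t1') * (\<integral>\<^sup>+u. \<integral>\<^sup>+v. k u v ^ 2 \<partial>lborel \<partial>lborel)"
    by (rule nn_integral_cmult) measurable
  finally have "(\<integral>\<^sup>+u. g u \<partial>lborel)^2 \<le> emeasure lborel (Q t1) * (emeasure lborel (Q t1') * (\<integral>\<^sup>+u. \<integral>\<^sup>+v. k u v ^ 2 \<partial>lborel \<partial>lborel))"
    by (simp add: mult_left_mono)
  then show ?thesis unfolding g_def k2 unfolding k_def J_def by (simp add: mult_ac)
qed

lemma stepC:
  assumes d1: "t1 \<noteq> t0" and d1': "t1' \<noteq> t0" and ha: "ti \<noteq> t0" and hb: "t2 \<noteq> t1" and hc: "t2' \<noteq> t0"
  and key: "(t2'-t1')*(t2-t0)*(ti-t1) + (t2'-t0)*(t1-t2)*(ti-t0) = 0"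
  shows "(\<integral>\<^sup>+u. \<integral>\<^sup>+v. \<integral>\<^sup>+y. \<integral>\<^sup>+z. (indicator S (lf t0 t1 y u) * indicator S (lf t0 t1' y v)) *
        (indicator S (lf t0 t1 z u) * indicator S (lf t0 t1' z v)) \<partial>lborel \<partial>lborel \<partial>lborel \<partial>lborel)
    \<le> ennreal (\<bar>1/((ti-t0)/(t1-t0))\<bar>^CARD('n) * \<bar>1/(1-(t2-t0)/(t1-t0))\<bar>^CARD('n) * \<bar>1/((t2'-t0)/(t1'-t0))\<bar>^CARD('n))
      * Mv * (emeasure lborel (Q ti) * emeasure lborel (Q t2) * emeasure lborel (Q t2'))"
proof -
  define a where "a = (ti-t0)/(t1-t0)"
  define b where "b = (t2-t0)/(t1-t0)"
  define c where "c = (t2'-t0)/(t1'-t0)"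
  have nz: "t1 - t0 \<noteq> 0" "t1' - t0 \<noteq> 0" "ti - t0 \<noteq> 0" "t1 - t2 \<noteq> 0" "t2' - t0 \<noteq> 0"
    using assms by auto
  have a0: "a \<noteq> 0" unfolding a_def using nz by simp
  have b1: "1 - b \<noteq> 0" unfolding b_def using nz by (simp add: field_simps)
  have b1': "b \<noteq> 1" using b1 by auto
  have c0: "c \<noteq> 0" unfolding c_def using nz by simp
  have kap: "(1 - 1/c) * (-(b/(1-b))) * (1 - 1/a) = 1"
    unfolding a_def b_def c_def by (rule kappa[OF d1 d1' ha hb hc key])
  define F where "F y u z v = (indicator (Q ti) (y + a *\<^sub>R (u - y)) * indicator S (lf t0 t1' y v) *
     indicator (Q t2) (z + b *\<^sub>R (u - z)) * indicator (Q t2') (z + c *\<^sub>R (v - z)) :: ennreal)" for y u z v :: "real^'n"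
  have pw: "(indicator S (lf t0 t1 y u) * indicator S (lf t0 t1' y v)) *
        (indicator S (lf t0 t1 z u) * indicator S (lf t0 t1' z v)) \<le> F y u z v" for y u z v
  proof -
    have 1: "(indicator S (lf t0 t1 y u) :: ennreal) \<le> indicator (Q ti) (y + a *\<^sub>R (u - y))"
      using lf_ind_le[OF d1, where y=y and u=u and r=ti] unfolding a_def .
    have 2: "(indicator S (lf t0 t1 z u) :: ennreal) \<le> indicator (Q t2) (z + b *\<^sub>R (u - z))"
      using lf_ind_le[OF d1, where y=z and u=u and r=t2] unfolding b_def .
    have 3: "(indicator S (lf t0 t1' z v) :: ennreal) \<le> indicator (Q t2') (z + c *\<^sub>R (v - z))"
      using lf_ind_le[OF d1', where y=z and u=v and r=t2'] unfolding c_def .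
    have "(indicator S (lf t0 t1 y u) * indicator S (lf t0 t1' y v)) *
        (indicator S (lf t0 t1 z u) * indicator S (lf t0 t1' z v)) =
        (indicator S (lf t0 t1 y u) * indicator S (lf t0 t1' y v)) *
        indicator S (lf t0 t1 z u) * (indicator S (lf t0 t1' z v) :: ennreal)" by (simp add: mult_ac)
    also have "\<dots> \<le> F y u z v" unfolding F_def
      by (intro mult_mono 1 2 3 order_refl) auto
    finally show ?thesis .
  qed
  have C1: "(\<integral>\<^sup>+u. \<integral>\<^sup>+v. \<integral>\<^sup>+y. \<integral>\<^sup>+z. (indicator S (lf t0 t1 y u) * indicator S (lf t0 t1' y v)) *
        (indicator S (lf t0 t1 z u) * indicator S (lf t0 t1' z v)) \<partial>lborel \<partial>lborel \<partial>lborel \<partial>lborel)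
     \<le> (\<integral>\<^sup>+u. \<integral>\<^sup>+v. \<integral>\<^sup>+y. \<integral>\<^sup>+z. F y u z v \<partial>lborel \<partial>lborel \<partial>lborel \<partial>lborel)"
    by (intro nn_integral_mono pw)
  have s1: "(\<integral>\<^sup>+v. \<integral>\<^sup>+y. \<integral>\<^sup>+z. F y u z v \<partial>lborel \<partial>lborel \<partial>lborel) = (\<integral>\<^sup>+y. \<integral>\<^sup>+v. \<integral>\<^sup>+z. F y u z v \<partial>lborel \<partial>lborel \<partial>lborel)" for u
    by (rule nn_swap) (unfold F_def, measurable)
  have s2: "(\<integral>\<^sup>+v. \<integral>\<^sup>+z. F y u z v \<partial>lborel \<partial>lborel) = (\<integral>\<^sup>+z. \<integral>\<^sup>+v. F y u z v \<partial>lborel \<partial>lborel)" for u y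
    by (rule nn_swap) (unfold F_def, measurable)
  have s3: "(\<integral>\<^sup>+u. \<integral>\<^sup>+y. \<integral>\<^sup>+z. \<integral>\<^sup>+v. F y u z v \<partial>lborel \<partial>lborel \<partial>lborel \<partial>lborel) = (\<integral>\<^sup>+y. \<integral>\<^sup>+u. \<integral>\<^sup>+z. \<integral>\<^sup>+v. F y u z v \<partial>lborel \<partial>lborel \<partial>lborel \<partial>lborel)"
    by (rule nn_swap) (unfold F_def, measurable)
  have C2: "(\<integral>\<^sup>+u. \<integral>\<^sup>+v. \<integral>\<^sup>+y. \<integral>\<^sup>+z. F y u z v \<partial>lborel \<partial>lborel \<partial>lborel \<partial>lborel) = (\<integral>\<^sup>+y. \<integral>\<^sup>+u. \<integral>\<^sup>+z. \<integral>\<^sup>+v. F y u z v \<partial>lborel \<partial>lborel \<partial>lborel \<partial>lborel)"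
    by (simp only: s1 s2 s3)
  define U where "U y \<alpha> = (y - (1/a) *\<^sub>R y) + (1/a) *\<^sub>R \<alpha>" for y \<alpha> :: "real^'n"
  define Z where "Z u \<beta> = (-(b/(1-b))) *\<^sub>R u + (1/(1-b)) *\<^sub>R \<beta>" for u \<beta> :: "real^'n"
  define W where "W z \<gamma> = (z - (1/c) *\<^sub>R z) + (1/c) *\<^sub>R \<gamma>" for z \<gamma> :: "real^'n"
  define ca where "ca = ennreal (\<bar>1/a\<bar>^CARD('n))"
  define cb where "cb = ennreal (\<bar>1/(1-b)\<bar>^CARD('n))"
  define cc where "cc = ennreal (\<bar>1/c\<bar>^CARD('n))"
  have E3: "(\<integral>\<^sup>+v. F y u z v \<partial>lborel) = cc * (\<integral>\<^sup>+\<gamma>. F y u z (W z \<gamma>) \<partial>lborel)" for y u z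
  proof -
    have "(\<lambda>v. F y u z v) \<in> borel_measurable borel" unfolding F_def by measurable
    then show ?thesis unfolding cc_def W_def
      by (subst nn_affine[where c="1/c" and t="z - (1/c) *\<^sub>R z"]) (auto simp: c0)
  qed
  have E2: "(\<integral>\<^sup>+z. \<integral>\<^sup>+v. F y u z v \<partial>lborel \<partial>lborel) = cb * (\<integral>\<^sup>+\<beta>. \<integral>\<^sup>+v. F y u (Z u \<beta>) v \<partial>lborel \<partial>lborel)" for y u
  proof -
    have "(\<lambda>z. \<integral>\<^sup>+v. F y u z v \<partial>lborel) \<in> borel_measurable borel" unfolding F_def by measurable
    then show ?thesis unfolding cb_def Z_def
      by (subst nn_affine[where c="1/(1-b)" and t="(-(b/(1-b))) *\<^sub>R u"]) (auto simp: b1')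
  qed
  have E1: "(\<integral>\<^sup>+u. \<integral>\<^sup>+z. \<integral>\<^sup>+v. F y u z v \<partial>lborel \<partial>lborel \<partial>lborel) = ca * (\<integral>\<^sup>+\<alpha>. \<integral>\<^sup>+z. \<integral>\<^sup>+v. F y (U y \<alpha>) z v \<partial>lborel \<partial>lborel \<partial>lborel)" for y
  proof -
    have "(\<lambda>u. \<integral>\<^sup>+z. \<integral>\<^sup>+v. F y u z v \<partial>lborel \<partial>lborel) \<in> borel_measurable borel" unfolding F_def by measurable
    then show ?thesis unfolding ca_def U_def
      by (subst nn_affine[where c="1/a" and t="y - (1/a) *\<^sub>R y"]) (auto simp: a0)
  qed
  define H where "H y \<alpha> \<beta> \<gamma> = F y (U y \<alpha>) (Z (U y \<alpha>) \<beta>) (W (Z (U y \<alpha>) \<beta>) \<gamma>)" for y \<alpha> \<beta> \<gamma>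
  have Hm: "(\<lambda>p. H (fst p) (snd p) \<beta> \<gamma>) \<in> borel_measurable (borel \<Otimes>\<^sub>M borel)" for \<beta> \<gamma>
    unfolding H_def F_def U_def Z_def W_def by measurable
  have p3: "(\<integral>\<^sup>+\<beta>. cc * (\<integral>\<^sup>+\<gamma>. H y \<alpha> \<beta> \<gamma> \<partial>lborel) \<partial>lborel) = cc * (\<integral>\<^sup>+\<beta>. \<integral>\<^sup>+\<gamma>. H y \<alpha> \<beta> \<gamma> \<partial>lborel \<partial>lborel)" for y \<alpha>
    by (rule nn_integral_cmult) (unfold H_def F_def U_def Z_def W_def, measurable)
  have p2: "(\<integral>\<^sup>+\<alpha>. cb * (cc * (\<integral>\<^sup>+\<beta>. \<integral>\<^sup>+\<gamma>. H y \<alpha> \<beta> \<gamma> \<partial>lborel \<partial>lborel)) \<partial>lborel) = cb * cc * (\<integral>\<^sup>+\<alpha>. \<integral>\<^sup>+\<beta>. \<integral>\<^sup>+\<gamma>. H y \<alpha> \<beta> \<gamma> \<partial>lborel \<partial>lborel \<partial>lborel)" for y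
  proof -
    have "(\<integral>\<^sup>+\<alpha>. cb * (cc * (\<integral>\<^sup>+\<beta>. \<integral>\<^sup>+\<gamma>. H y \<alpha> \<beta> \<gamma> \<partial>lborel \<partial>lborel)) \<partial>lborel) = (\<integral>\<^sup>+\<alpha>. (cb * cc) * (\<integral>\<^sup>+\<beta>. \<integral>\<^sup>+\<gamma>. H y \<alpha> \<beta> \<gamma> \<partial>lborel \<partial>lborel) \<partial>lborel)"
      by (simp only: mult.assoc)
    also have "\<dots> = cb * cc * (\<integral>\<^sup>+\<alpha>. \<integral>\<^sup>+\<beta>. \<integral>\<^sup>+\<gamma>. H y \<alpha> \<beta> \<gamma> \<partial>lborel \<partial>lborel \<partial>lborel)"
      by (rule nn_integral_cmult) (unfold H_def F_def U_def Z_def W_def, measurable)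
    finally show ?thesis .
  qed
  have p1: "(\<integral>\<^sup>+y. ca * (cb * cc * (\<integral>\<^sup>+\<alpha>. \<integral>\<^sup>+\<beta>. \<integral>\<^sup>+\<gamma>. H y \<alpha> \<beta> \<gamma> \<partial>lborel \<partial>lborel \<partial>lborel)) \<partial>lborel) = ca * cb * cc * (\<integral>\<^sup>+y. \<integral>\<^sup>+\<alpha>. \<integral>\<^sup>+\<beta>. \<integral>\<^sup>+\<gamma>. H y \<alpha> \<beta> \<gamma> \<partial>lborel \<partial>lborel \<partial>lborel \<partial>lborel)"
  proof -
    have "(\<integral>\<^sup>+y. ca * (cb * cc * (\<integral>\<^sup>+\<alpha>. \<integral>\<^sup>+\<beta>. \<integral>\<^sup>+\<gamma>. H y \<alpha> \<beta> \<gamma> \<partial>lborel \<partial>lborel \<partial>lborel)) \<partial>lborel) = (\<integral>\<^sup>+y. (ca * cb * cc) * (\<integral>\<^sup>+\<alpha>. \<integral>\<^sup>+\<beta>. \<integral>\<^sup>+\<gamma>. H y \<alpha> \<beta> \<gamma> \<partial>lborel \<partial>lborel \<partial>lborel) \<partial>lborel)"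
      by (simp only: mult.assoc)
    also have "\<dots> = ca * cb * cc * (\<integral>\<^sup>+y. \<integral>\<^sup>+\<alpha>. \<integral>\<^sup>+\<beta>. \<integral>\<^sup>+\<gamma>. H y \<alpha> \<beta> \<gamma> \<partial>lborel \<partial>lborel \<partial>lborel \<partial>lborel)"
      by (rule nn_integral_cmult) (unfold H_def F_def U_def Z_def W_def, measurable)
    finally show ?thesis .
  qed
  have C3: "(\<integral>\<^sup>+y. \<integral>\<^sup>+u. \<integral>\<^sup>+z. \<integral>\<^sup>+v. F y u z v \<partial>lborel \<partial>lborel \<partial>lborel \<partial>lborel) = ca * cb * cc * (\<integral>\<^sup>+y. \<integral>\<^sup>+\<alpha>. \<integral>\<^sup>+\<beta>. \<integral>\<^sup>+\<gamma>. H y \<alpha> \<beta> \<gamma> \<partial>lborel \<partial>lborel \<partial>lborel \<partial>lborel)"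
  proof -
    have "(\<integral>\<^sup>+y. \<integral>\<^sup>+u. \<integral>\<^sup>+z. \<integral>\<^sup>+v. F y u z v \<partial>lborel \<partial>lborel \<partial>lborel \<partial>lborel) =
      (\<integral>\<^sup>+y. ca * (\<integral>\<^sup>+\<alpha>. \<integral>\<^sup>+z. \<integral>\<^sup>+v. F y (U y \<alpha>) z v \<partial>lborel \<partial>lborel \<partial>lborel) \<partial>lborel)"
      by (simp only: E1)
    also have "\<dots> = (\<integral>\<^sup>+y. ca * (\<integral>\<^sup>+\<alpha>. cb * (\<integral>\<^sup>+\<beta>. \<integral>\<^sup>+v. F y (U y \<alpha>) (Z (U y \<alpha>) \<beta>) v \<partial>lborel \<partial>lborel) \<partial>lborel) \<partial>lborel)"
      by (simp only: E2)
    also have "\<dots> = (\<integral>\<^sup>+y. ca * (\<integral>\<^sup>+\<alpha>. cb * (\<integral>\<^sup>+\<beta>. cc * (\<integral>\<^sup>+\<gamma>. F y (U y \<alpha>) (Z (U y \<alpha>) \<beta>) (W (Z (U y \<alpha>) \<beta>) \<gamma>) \<partial>lborel) \<partial>lborel) \<partial>lborel) \<partial>lborel)"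
      by (simp only: E3)
    also have "\<dots> = (\<integral>\<^sup>+y. ca * (\<integral>\<^sup>+\<alpha>. cb * (\<integral>\<^sup>+\<beta>. cc * (\<integral>\<^sup>+\<gamma>. H y \<alpha> \<beta> \<gamma> \<partial>lborel) \<partial>lborel) \<partial>lborel) \<partial>lborel)"
      by (simp only: H_def)
    also have "\<dots> = ca * cb * cc * (\<integral>\<^sup>+y. \<integral>\<^sup>+\<alpha>. \<integral>\<^sup>+\<beta>. \<integral>\<^sup>+\<gamma>. H y \<alpha> \<beta> \<gamma> \<partial>lborel \<partial>lborel \<partial>lborel \<partial>lborel)"
      by (simp only: p3 p2 p1)
    finally show ?thesis .
  qed
  define Xi where "Xi \<alpha> \<beta> \<gamma> = (1/(t1'-t0)) *\<^sub>R W (Z (U 0 \<alpha>) \<beta>) \<gamma>" for \<alpha> \<beta> \<gamma> :: "real^'n"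
  have h1: "y + a *\<^sub>R (U y \<alpha> - y) = \<alpha>" for y \<alpha>
    unfolding U_def using a0 by (simp add: vec_eq_iff divide_simps; simp add: algebra_simps)
  have h2: "Z u \<beta> + b *\<^sub>R (u - Z u \<beta>) = \<beta>" for u \<beta>
    unfolding Z_def using b1 b1' by (simp add: vec_eq_iff divide_simps; simp add: algebra_simps)
  have h3: "z + c *\<^sub>R (W z \<gamma> - z) = \<gamma>" for z \<gamma>
    unfolding W_def using c0 by (simp add: vec_eq_iff divide_simps; simp add: algebra_simps)
  have h4: "W (Z (U y \<alpha>) \<beta>) \<gamma> - y = W (Z (U 0 \<alpha>) \<beta>) \<gamma>" for y \<alpha> \<beta> \<gamma>
  proof -
    have "W (Z (U y \<alpha>) \<beta>) \<gamma> = W (Z (U 0 \<alpha>) \<beta>) \<gamma> + ((1 - 1/c) * (-(b/(1-b))) * (1 - 1/a)) *\<^sub>R y"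
      unfolding U_def Z_def W_def by (rule vecid)
    then show ?thesis unfolding kap by simp
  qed
  define Hs where "Hs y \<alpha> \<beta> \<gamma> = indicator (Q ti) \<alpha> * indicator S (Xi \<alpha> \<beta> \<gamma>, y - t0 *\<^sub>R Xi \<alpha> \<beta> \<gamma>) *
      indicator (Q t2) \<beta> * (indicator (Q t2') \<gamma> :: ennreal)" for y \<alpha> \<beta> \<gamma>
  have HX: "H y \<alpha> \<beta> \<gamma> = Hs y \<alpha> \<beta> \<gamma>" for y \<alpha> \<beta> \<gamma>
    unfolding H_def F_def Hs_def Xi_def by (simp only: h1 h2 h3 h4)
  have w1: "(\<integral>\<^sup>+y. \<integral>\<^sup>+\<alpha>. \<integral>\<^sup>+\<beta>. \<integral>\<^sup>+\<gamma>. Hs y \<alpha> \<beta> \<gamma> \<partial>lborel \<partial>lborel \<partial>lborel \<partial>lborel) = (\<integral>\<^sup>+\<alpha>. \<integral>\<^sup>+y. \<integral>\<^sup>+\<beta>. \<integral>\<^sup>+\<gamma>. Hs y \<alpha> \<beta> \<gamma> \<partial>lborel \<partial>lborel \<partial>lborel \<partial>lborel)"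
    by (rule nn_swap) (unfold Hs_def Xi_def U_def Z_def W_def, measurable)
  have w2: "(\<integral>\<^sup>+y. \<integral>\<^sup>+\<beta>. \<integral>\<^sup>+\<gamma>. Hs y \<alpha> \<beta> \<gamma> \<partial>lborel \<partial>lborel \<partial>lborel) = (\<integral>\<^sup>+\<beta>. \<integral>\<^sup>+y. \<integral>\<^sup>+\<gamma>. Hs y \<alpha> \<beta> \<gamma> \<partial>lborel \<partial>lborel \<partial>lborel)" for \<alpha>
    by (rule nn_swap) (unfold Hs_def Xi_def U_def Z_def W_def, measurable)
  have w3: "(\<integral>\<^sup>+y. \<integral>\<^sup>+\<gamma>. Hs y \<alpha> \<beta> \<gamma> \<partial>lborel \<partial>lborel) = (\<integral>\<^sup>+\<gamma>. \<integral>\<^sup>+y. Hs y \<alpha> \<beta> \<gamma> \<partial>lborel \<partial>lborel)" for \<alpha> \<beta>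
    by (rule nn_swap) (unfold Hs_def Xi_def U_def Z_def W_def, measurable)
  have inner: "(\<integral>\<^sup>+y. Hs y \<alpha> \<beta> \<gamma> \<partial>lborel) \<le> Mv * indicator (Q ti) \<alpha> * indicator (Q t2) \<beta> * indicator (Q t2') \<gamma>" for \<alpha> \<beta> \<gamma>
  proof -
    have "(\<integral>\<^sup>+y. Hs y \<alpha> \<beta> \<gamma> \<partial>lborel) = (\<integral>\<^sup>+y. (indicator (Q ti) \<alpha> * indicator (Q t2) \<beta> * indicator (Q t2') \<gamma>) * indicator S (Xi \<alpha> \<beta> \<gamma>, y - t0 *\<^sub>R Xi \<alpha> \<beta> \<gamma>) \<partial>lborel)"
      unfolding Hs_def by (rule nn_integral_cong) (simp add: mult_ac)
    also have "\<dots> = (indicator (Q ti) \<alpha> * indicator (Q t2) \<beta> * indicator (Q t2') \<gamma>) * (\<integral>\<^sup>+y. indicator S (Xi \<alpha> \<beta> \<gamma>, y - t0 *\<^sub>R Xi \<alpha> \<beta> \<gamma>) \<partial>lborel)"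
      by (rule nn_integral_cmult) measurable
    finally have eq: "(\<integral>\<^sup>+y. Hs y \<alpha> \<beta> \<gamma> \<partial>lborel) = (indicator (Q ti) \<alpha> * indicator (Q t2) \<beta> * indicator (Q t2') \<gamma>) * (\<integral>\<^sup>+y. indicator S (Xi \<alpha> \<beta> \<gamma>, y - t0 *\<^sub>R Xi \<alpha> \<beta> \<gamma>) \<partial>lborel)" .
    have "(\<integral>\<^sup>+y. indicator S (Xi \<alpha> \<beta> \<gamma>, y - t0 *\<^sub>R Xi \<alpha> \<beta> \<gamma>) \<partial>lborel) \<le> Mv"
      using SM[of "Xi \<alpha> \<beta> \<gamma>"] unfolding fibre_shift[of _ t0] .
    then have "(indicator (Q ti) \<alpha> * indicator (Q t2) \<beta> * indicator (Q t2') \<gamma>) * (\<integral>\<^sup>+y. indicator S (Xi \<alpha> \<beta> \<gamma>, y - t0 *\<^sub>R Xi \<alpha> \<beta> \<gamma>) \<partial>lborel)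
       \<le> (indicator (Q ti) \<alpha> * indicator (Q t2) \<beta> * indicator (Q t2') \<gamma>) * Mv"
      by (rule mult_left_mono) simp
    then show ?thesis unfolding eq by (simp add: mult_ac)
  qed
  have C5: "(\<integral>\<^sup>+y. \<integral>\<^sup>+\<alpha>. \<integral>\<^sup>+\<beta>. \<integral>\<^sup>+\<gamma>. Hs y \<alpha> \<beta> \<gamma> \<partial>lborel \<partial>lborel \<partial>lborel \<partial>lborel)
     \<le> Mv * (emeasure lborel (Q ti) * emeasure lborel (Q t2) * emeasure lborel (Q t2'))"
  proof -
    have "(\<integral>\<^sup>+y. \<integral>\<^sup>+\<alpha>. \<integral>\<^sup>+\<beta>. \<integral>\<^sup>+\<gamma>. Hs y \<alpha> \<beta> \<gamma> \<partial>lborel \<partial>lborel \<partial>lborel \<partial>lborel)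
      = (\<integral>\<^sup>+\<alpha>. \<integral>\<^sup>+\<beta>. \<integral>\<^sup>+\<gamma>. \<integral>\<^sup>+y. Hs y \<alpha> \<beta> \<gamma> \<partial>lborel \<partial>lborel \<partial>lborel \<partial>lborel)"
      by (simp only: w1 w2 w3)
    also have "\<dots> \<le> (\<integral>\<^sup>+\<alpha>. \<integral>\<^sup>+\<beta>. \<integral>\<^sup>+\<gamma>. Mv * indicator (Q ti) \<alpha> * indicator (Q t2) \<beta> * indicator (Q t2') \<gamma> \<partial>lborel \<partial>lborel \<partial>lborel)"
      by (intro nn_integral_mono inner)
    also have "\<dots> = (\<integral>\<^sup>+\<alpha>. \<integral>\<^sup>+\<beta>. (Mv * indicator (Q ti) \<alpha> * indicator (Q t2) \<beta>) * emeasure lborel (Q t2') \<partial>lborel \<partial>lborel)"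
      by (simp only: nn_integral_cmult_indicator[OF Q_meas[unfolded sets_lborel[symmetric]]])
    also have "\<dots> = (\<integral>\<^sup>+\<alpha>. \<integral>\<^sup>+\<beta>. (Mv * indicator (Q ti) \<alpha> * emeasure lborel (Q t2')) * indicator (Q t2) \<beta> \<partial>lborel \<partial>lborel)"
      by (simp only: mult_ac)
    also have "\<dots> = (\<integral>\<^sup>+\<alpha>. (Mv * indicator (Q ti) \<alpha> * emeasure lborel (Q t2')) * emeasure lborel (Q t2) \<partial>lborel)"
      by (simp only: nn_integral_cmult_indicator[OF Q_meas[unfolded sets_lborel[symmetric]]])
    also have "\<dots> = (\<integral>\<^sup>+\<alpha>. (Mv * emeasure lborel (Q t2') * emeasure lborel (Q t2)) * indicator (Q ti) \<alpha> \<partial>lborel)"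
      by (simp only: mult_ac)
    also have "\<dots> = (Mv * emeasure lborel (Q t2') * emeasure lborel (Q t2)) * emeasure lborel (Q ti)"
      by (simp only: nn_integral_cmult_indicator[OF Q_meas[unfolded sets_lborel[symmetric]]])
    finally show ?thesis by (simp add: mult_ac)
  qed
  have "ca * cb * cc = ennreal (\<bar>1/((ti-t0)/(t1-t0))\<bar>^CARD('n) * \<bar>1/(1-(t2-t0)/(t1-t0))\<bar>^CARD('n) * \<bar>1/((t2'-t0)/(t1'-t0))\<bar>^CARD('n))"
    unfolding ca_def cb_def cc_def a_def b_def c_def by (simp add: ennreal_mult)
  moreover have "(\<integral>\<^sup>+y. \<integral>\<^sup>+\<alpha>. \<integral>\<^sup>+\<beta>. \<integral>\<^sup>+\<gamma>. H y \<alpha> \<beta> \<gamma> \<partial>lborel \<partial>lborel \<partial>lborel \<partial>lborel) = (\<integral>\<^sup>+y. \<integral>\<^sup>+\<alpha>. \<integral>\<^sup>+\<beta>. \<integral>\<^sup>+\<gamma>. Hs y \<alpha> \<beta> \<gamma> \<partial>lborel \<partial>lborel \<partial>lborel \<partial>lborel)"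
    by (simp only: HX)
  ultimately show ?thesis using C1 C2 C3 C5 mult_left_mono[OF C5, of "ca * cb * cc"]
    by (simp add: mult_ac)
qed

lemma main_ineq:
  assumes d1: "t1 \<noteq> t0" and d1': "t1' \<noteq> t0" and ha: "ti \<noteq> t0" and hb: "t2 \<noteq> t1" and hc: "t2' \<noteq> t0"
  and key: "(t2'-t1')*(t2-t0)*(ti-t1) + (t2'-t0)*(t1-t2)*(ti-t0) = 0"
  shows "(\<integral>\<^sup>+p. indicator S p \<partial>(lborel \<Otimes>\<^sub>M lborel))^4 \<le>
    ennreal ((\<bar>1/(t1-t0)\<bar>^CARD('n) * \<bar>1/(t1'-t0)\<bar>^CARD('n))^2 *
      (\<bar>1/((ti-t0)/(t1-t0))\<bar>^CARD('n) * \<bar>1/(1-(t2-t0)/(t1-t0))\<bar>^CARD('n) * \<bar>1/((t2'-t0)/(t1'-t0))\<bar>^CARD('n)))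
    * Mv * (emeasure lborel (Q t0)^2 * emeasure lborel (Q t1) * emeasure lborel (Q t1')
       * emeasure lborel (Q ti) * emeasure lborel (Q t2) * emeasure lborel (Q t2'))"
proof -
  define X where "X = (\<integral>\<^sup>+p. indicator S p \<partial>(lborel \<Otimes>\<^sub>M lborel))"
  define T where "T = (\<integral>\<^sup>+u. \<integral>\<^sup>+v. \<integral>\<^sup>+y. indicator S (lf t0 t1 y u) * indicator S (lf t0 t1' y v) \<partial>lborel \<partial>lborel \<partial>lborel)"
  define R where "R = (\<integral>\<^sup>+u. \<integral>\<^sup>+v. \<integral>\<^sup>+y. \<integral>\<^sup>+z. (indicator S (lf t0 t1 y u) * indicator S (lf t0 t1' y v)) *
        (indicator S (lf t0 t1 z u) * indicator S (lf t0 t1' z v)) \<partial>lborel \<partial>lborel \<partial>lborel \<partial>lborel)"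
  define K1 where "K1 = \<bar>1/(t1-t0)\<bar>^CARD('n) * \<bar>1/(t1'-t0)\<bar>^CARD('n)"
  define K2 where "K2 = \<bar>1/((ti-t0)/(t1-t0))\<bar>^CARD('n) * \<bar>1/(1-(t2-t0)/(t1-t0))\<bar>^CARD('n) * \<bar>1/((t2'-t0)/(t1'-t0))\<bar>^CARD('n)"
  have K1: "K1 \<ge> 0" "K2 \<ge> 0" unfolding K1_def K2_def by auto
  have A: "X^2 \<le> emeasure lborel (Q t0) * ennreal K1 * T"
    unfolding X_def T_def K1_def by (rule stepA[OF d1 d1'])
  have B: "T^2 \<le> emeasure lborel (Q t1) * emeasure lborel (Q t1') * R"
    unfolding T_def R_def by (rule stepB[OF d1 d1'])
  have C: "R \<le> ennreal K2 * Mv * (emeasure lborel (Q ti) * emeasure lborel (Q t2) * emeasure lborel (Q t2'))"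
    unfolding R_def K2_def by (rule stepC[OF d1 d1' ha hb hc key])
  have "X^4 = (X^2)^2" by (simp add: power_mult[symmetric])
  also have "\<dots> \<le> (emeasure lborel (Q t0) * ennreal K1 * T)^2"
    by (rule power_mono[OF A]) simp
  also have "\<dots> = (emeasure lborel (Q t0) * ennreal K1)^2 * T^2" by (simp add: power_mult_distrib)
  also have "\<dots> \<le> (emeasure lborel (Q t0) * ennreal K1)^2 * (emeasure lborel (Q t1) * emeasure lborel (Q t1') * R)"
    by (rule mult_left_mono[OF B]) simp
  also have "\<dots> \<le> (emeasure lborel (Q t0) * ennreal K1)^2 * (emeasure lborel (Q t1) * emeasure lborel (Q t1') *
      (ennreal K2 * Mv * (emeasure lborel (Q ti) * emeasure lborel (Q t2) * emeasure lborel (Q t2'))))"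
    by (intro mult_left_mono C) auto
  also have "\<dots> = ennreal (K1^2 * K2) * Mv * (emeasure lborel (Q t0)^2 * emeasure lborel (Q t1) * emeasure lborel (Q t1')
       * emeasure lborel (Q ti) * emeasure lborel (Q t2) * emeasure lborel (Q t2'))"
    using K1 by (simp add: power_mult_distrib ennreal_mult ennreal_power mult_ac)
  finally show ?thesis unfolding X_def K1_def K2_def .
qed

end

lemma line_proj:
  fixes g :: "((real^'n) \<times> real) set"
  assumes L: "is_line g" and p: "(x,0) \<in> g" and q: "(x+\<xi>,1) \<in> g"
  shows "proj_line t g = x + t *\<^sub>R \<xi>"
proof -
  have aff: "affine g" and dim: "aff_dim g = 1" using L unfolding is_line_def by auto
  have ne: "(x,0::real) \<noteq> (x+\<xi>,1)" by simp
  have sub: "affine hull {(x,0::real), (x+\<xi>,1)} \<subseteq> g"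
    using p q aff by (intro hull_minimal) auto
  have "aff_dim (affine hull {(x,0::real), (x+\<xi>,1)}) = aff_dim g"
    using ne dim by (simp add: aff_dim_affine_hull)
  then have geq: "affine hull {(x,0::real), (x+\<xi>,1)} = g"
    by (intro affine_dim_equal[OF affine_affine_hull aff _ sub]) auto
  have mem: "(x + t *\<^sub>R \<xi>, t) \<in> g"
  proof -
    have aa: "\<forall>x\<in>g. \<forall>y\<in>g. \<forall>u v. u + v = 1 \<longrightarrow> u *\<^sub>R x + v *\<^sub>R y \<in> g" using aff unfolding affine_def .
    have "(1 - t) *\<^sub>R (x,0::real) + t *\<^sub>R (x+\<xi>,1) \<in> g"
      by (rule aa[rule_format]) (simp_all add: p q)
    moreover have "(1 - t) *\<^sub>R (x,0::real) + t *\<^sub>R (x+\<xi>,1) = (x + t *\<^sub>R \<xi>, t)"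
      by (simp add: algebra_simps)
    ultimately show ?thesis by simp
  qed
  have uniq: "x' = x + t *\<^sub>R \<xi>" if "(x', t) \<in> g" for x'
  proof -
    from that geq obtain u v where uv: "u + v = 1" "(x', t) = u *\<^sub>R (x,0::real) + v *\<^sub>R (x+\<xi>,1)"
      unfolding affine_hull_2 by auto
    then have "t = v" "x' = u *\<^sub>R x + v *\<^sub>R (x + \<xi>)" by auto
    moreover have "u = 1 - v" using uv by simp
    ultimately show ?thesis by (simp add: algebra_simps)
  qed
  show ?thesis unfolding proj_line_def
  proof (rule the_equality)
    show "(x + t *\<^sub>R \<xi>, t) \<in> g" by (fact mem)
  next
    fix x' assume "(x', t) \<in> g"
    then show "x' = x + t *\<^sub>R \<xi>" by (rule uniq)
  qed
qed

lemma scal_gen: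
  fixes P P' A B C :: real
  assumes "P \<noteq> 0" "P' \<noteq> 0" "A \<noteq> 0" "B \<noteq> 0" "C \<noteq> 0"
  shows "(\<bar>1/P\<bar> * \<bar>1/P'\<bar>)^2 * (\<bar>1/(A/P)\<bar> * \<bar>1/(B/P)\<bar> * \<bar>1/(C/P')\<bar>) = 1/(\<bar>B\<bar> * \<bar>A\<bar> * \<bar>P'\<bar> * \<bar>C\<bar>)"
  using assms by (simp add: abs_divide abs_mult field_simps power2_eq_square)

lemma pw_gen:
  fixes X Y A B C :: real
  shows "(X^m * Y^m)^2 * (A^m * B^m * C^m) = ((X*Y)^2*(A*B*C))^m"
proof -
  have "(X^m * Y^m)^2 = ((X*Y)^2)^m"
    by (simp add: power_mult_distrib[symmetric] power_mult[symmetric] mult.commute)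
  then show ?thesis by (simp add: power_mult_distrib)
qed

lemma const_eq:
  fixes t0 t1 t1' t2 t2' ti :: real
  assumes "t1 \<noteq> t0" "t1' \<noteq> t0" "ti \<noteq> t0" "t2 \<noteq> t1" "t2' \<noteq> t0"
  shows "(\<bar>1/(t1-t0)\<bar>^m * \<bar>1/(t1'-t0)\<bar>^m)^2 *
      (\<bar>1/((ti-t0)/(t1-t0))\<bar>^m * \<bar>1/(1-(t2-t0)/(t1-t0))\<bar>^m * \<bar>1/((t2'-t0)/(t1'-t0))\<bar>^m)
    = Dcoef m t1 t2 * Dcoef m t0 ti * Dcoef m t1' t0 * Dcoef m t2' t0"
proof -
  have b: "1-(t2-t0)/(t1-t0) = (t1-t2)/(t1-t0)" using assms by (simp add: field_simps)
  have s: "(\<bar>1/(t1-t0)\<bar> * \<bar>1/(t1'-t0)\<bar>)^2 * (\<bar>1/((ti-t0)/(t1-t0))\<bar> * \<bar>1/((t1-t2)/(t1-t0))\<bar> * \<bar>1/((t2'-t0)/(t1'-t0))\<bar>)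
     = 1/(\<bar>t1-t2\<bar> * \<bar>ti-t0\<bar> * \<bar>t1'-t0\<bar> * \<bar>t2'-t0\<bar>)"
    by (rule scal_gen) (use assms in auto)
  have "(\<bar>1/(t1-t0)\<bar>^m * \<bar>1/(t1'-t0)\<bar>^m)^2 *
      (\<bar>1/((ti-t0)/(t1-t0))\<bar>^m * \<bar>1/(1-(t2-t0)/(t1-t0))\<bar>^m * \<bar>1/((t2'-t0)/(t1'-t0))\<bar>^m)
    = ((\<bar>1/(t1-t0)\<bar> * \<bar>1/(t1'-t0)\<bar>)^2 * (\<bar>1/((ti-t0)/(t1-t0))\<bar> * \<bar>1/((t1-t2)/(t1-t0))\<bar> * \<bar>1/((t2'-t0)/(t1'-t0))\<bar>))^m"
    unfolding b by (rule pw_gen)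
  also have "\<dots> = (1/(\<bar>t1-t2\<bar> * \<bar>ti-t0\<bar> * \<bar>t1'-t0\<bar> * \<bar>t2'-t0\<bar>))^m" unfolding s ..
  also have "\<dots> = Dcoef m t1 t2 * Dcoef m t0 ti * Dcoef m t1' t0 * Dcoef m t2' t0"
    unfolding Dcoef_def by (simp add: power_mult_distrib power_divide abs_minus_commute[of t0 ti])
  finally show ?thesis .
qed



lemma final:
  fixes G :: "((real^'n) \<times> real) set set" and t1 t1' t2 t2' t0 tinf :: real
  assumes t: "t1 \<noteq> t2" "t0 \<noteq> tinf" "t0 \<noteq> t1" "t0 \<noteq> t1'" "t0 \<noteq> t2" "t0 \<noteq> t2'" "tinf \<noteq> t1" "tinf \<noteq> t2"
  and e: "((tinf - t0) * (t1 - t0)) / ((t1 - tinf) * (t1' - t0)) = ((tinf - t0) * (t2 - t0)) / ((t2 - tinf) * (t2' - t0))"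
  and G: "set_of_lines G" and X: "lines_X G \<in> sets lebesgue" "emeasure lebesgue (lines_X G) < \<infinity>"
  and F: "\<forall>\<xi>. lines_fibre G \<xi> \<in> sets lebesgue" and Mf: "lines_M_ennreal G < \<infinity>"
  and P: "\<forall>t. proj_lines t G \<in> sets lebesgue \<and> emeasure lebesgue (proj_lines t G) < \<infinity>"
  shows "lines_size G ^ 4 \<le> 1 * Dcoef CARD('n) t1 t2 * Dcoef CARD('n) t0 tinf * Dcoef CARD('n) t1' t0
           * Dcoef CARD('n) t2' t0 * lines_M G
           * (MAX t\<in>{tinf, t0, t1, t1', t2, t2'}. measure lebesgue (proj_lines t G)) ^ 7"
proof -
  define S0 where "S0 = main_part lborel (lines_X G)"
  have S0l: "S0 \<in> sets lborel" unfolding S0_def by (rule main_part_sets[OF X(1)])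
  have S0sub: "S0 \<subseteq> lines_X G" unfolding S0_def using main_part_null_part_Un[OF X(1)] by blast
  have S0m: "emeasure lebesgue (lines_X G) = emeasure lborel S0" unfolding S0_def using X(1) by simp
  have setsprod: "sets (borel \<Otimes>\<^sub>M borel) = sets (borel :: ((real^'n) \<times> (real^'n)) measure)"
    by (simp only: borel_prod)
  have S0b[measurable]: "S0 \<in> sets (borel \<Otimes>\<^sub>M borel)" using S0l by (simp add: setsprod)
  have ex: "\<exists>A'. A' \<in> sets lborel \<and> proj_lines t G \<subseteq> A' \<and> emeasure lebesgue (proj_lines t G) = emeasure lborel A'" for t
  proof -
    have "proj_lines t G \<in> sets lebesgue" using P by simp
    from completion_upper[OF this] obtain A' where "A' \<in> sets lborel" "proj_lines t G \<subseteq> A'"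
      "emeasure lebesgue (proj_lines t G) = emeasure lborel A'" by blast
    then show ?thesis by blast
  qed
  define Q where "Q t = (SOME A'. A' \<in> sets lborel \<and> proj_lines t G \<subseteq> A' \<and> emeasure lebesgue (proj_lines t G) = emeasure lborel A')" for t
  have Qall: "Q t \<in> sets lborel \<and> proj_lines t G \<subseteq> Q t \<and> emeasure lebesgue (proj_lines t G) = emeasure lborel (Q t)" for t
    unfolding Q_def by (rule someI_ex[OF ex])
  have Q: "\<And>t. Q t \<in> sets lborel" "\<And>t. proj_lines t G \<subseteq> Q t"
      "\<And>t. emeasure lebesgue (proj_lines t G) = emeasure lborel (Q t)"
    using Qall by blast+
  have Qb: "\<And>t. Q t \<in> sets borel" using Q(1) by simp
  have SQ: "x + t *\<^sub>R \<xi> \<in> Q t" if "(\<xi>, x) \<in> S0" for \<xi> x t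
  proof -
    from that S0sub have "(\<xi>, x) \<in> lines_X G" by blast
    then obtain g where g: "g \<in> G" "(x,0) \<in> g" "(x+\<xi>,1) \<in> g" unfolding lines_X_def by auto
    have "is_line g" using G g(1) unfolding set_of_lines_def by auto
    then have "proj_line t g = x + t *\<^sub>R \<xi>" using g by (intro line_proj)
    then have "x + t *\<^sub>R \<xi> \<in> proj_lines t G" unfolding proj_lines_def using g(1) by force
    then show ?thesis using Q(2) by blast
  qed
  have SM: "(\<integral>\<^sup>+x. indicator S0 (\<xi>,x) \<partial>lborel) \<le> lines_M_ennreal G" for \<xi>
  proof -
    have Bm: "{x. (\<xi>,x) \<in> S0} \<in> sets borel" by measurable
    have "(\<integral>\<^sup>+x. indicator S0 (\<xi>,x) \<partial>lborel) = (\<integral>\<^sup>+x. indicator {x. (\<xi>,x) \<in> S0} x \<partial>lborel)"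
      by (intro nn_integral_cong) (simp split: split_indicator)
    also have "\<dots> = emeasure lborel {x. (\<xi>,x) \<in> S0}" using Bm by simp
    also have "\<dots> = emeasure lebesgue {x. (\<xi>,x) \<in> S0}" using Bm by simp
    also have "\<dots> \<le> emeasure lebesgue (lines_fibre G \<xi>)"
      using F S0sub by (intro emeasure_mono) (auto simp: lines_fibre_def)
    also have "\<dots> \<le> lines_M_ennreal G" unfolding lines_M_ennreal_def by (rule SUP_upper) simp
    finally show ?thesis .
  qed
  have d1: "t1 \<noteq> t0" and d1': "t1' \<noteq> t0" and ha: "tinf \<noteq> t0" and hb: "t2 \<noteq> t1" and hc: "t2' \<noteq> t0"
    using t by auto
  have key: "(t2'-t1')*(t2-t0)*(tinf-t1) + (t2'-t0)*(t1-t2)*(tinf-t0) = 0"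
    by (rule keyder[OF t(1) t(2) t(3) t(4) t(5) t(6) t(7) t(8) e])
  define K where "K = (\<bar>1/(t1-t0)\<bar>^CARD('n) * \<bar>1/(t1'-t0)\<bar>^CARD('n))^2 *
      (\<bar>1/((tinf-t0)/(t1-t0))\<bar>^CARD('n) * \<bar>1/(1-(t2-t0)/(t1-t0))\<bar>^CARD('n) * \<bar>1/((t2'-t0)/(t1'-t0))\<bar>^CARD('n))"
  have main: "(\<integral>\<^sup>+p. indicator S0 p \<partial>(lborel \<Otimes>\<^sub>M lborel))^4 \<le> ennreal K * lines_M_ennreal G *
      (emeasure lborel (Q t0)^2 * emeasure lborel (Q t1) * emeasure lborel (Q t1')
       * emeasure lborel (Q tinf) * emeasure lborel (Q t2) * emeasure lborel (Q t2'))"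
    unfolding K_def
    by (rule main_ineq[where S=S0 and Q=Q and Mv="lines_M_ennreal G", OF S0b Qb SQ SM d1 d1' ha hb hc key])
  have "(\<integral>\<^sup>+p. indicator S0 p \<partial>(lborel \<Otimes>\<^sub>M lborel)) = emeasure lborel S0"
    using S0l by (simp add: lborel_prod)
  also have "\<dots> = ennreal (lines_size G)"
    unfolding lines_size_def S0m[symmetric] using X(2) by (simp add: emeasure_eq_ennreal_measure)
  finally have LHS: "(\<integral>\<^sup>+p. indicator S0 p \<partial>(lborel \<Otimes>\<^sub>M lborel)) = ennreal (lines_size G)" .
  have Mr: "lines_M_ennreal G = ennreal (lines_M G)"
    unfolding lines_M_def using Mf by simp
  define Pm where "Pm = (MAX t\<in>{tinf, t0, t1, t1', t2, t2'}. measure lebesgue (proj_lines t G))"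
  have Pm_ge: "measure lebesgue (proj_lines t G) \<le> Pm" if "t \<in> {tinf, t0, t1, t1', t2, t2'}" for t
    unfolding Pm_def by (rule Max_ge) (use that in auto)
  have Pm0: "0 \<le> Pm" using order_trans[OF measure_nonneg Pm_ge[of t0]] by simp
  have qle: "emeasure lborel (Q t) \<le> ennreal Pm" if "t \<in> {tinf, t0, t1, t1', t2, t2'}" for t
  proof -
    have "emeasure lborel (Q t) = ennreal (measure lebesgue (proj_lines t G))"
    proof -
      have "emeasure lebesgue (proj_lines t G) < \<infinity>" using P by blast
      then have fin: "emeasure lebesgue (proj_lines t G) \<noteq> top" by (simp add: infinity_ennreal_def)
      show ?thesis unfolding Q(3)[of t, symmetric] by (rule emeasure_eq_ennreal_measure[OF fin])
    qed
    then show ?thesis using ennreal_leI[OF Pm_ge[OF that]] by simp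
  qed
  have prodle: "emeasure lborel (Q t0)^2 * emeasure lborel (Q t1) * emeasure lborel (Q t1')
       * emeasure lborel (Q tinf) * emeasure lborel (Q t2) * emeasure lborel (Q t2')
     \<le> ennreal Pm ^ 2 * ennreal Pm * ennreal Pm * ennreal Pm * ennreal Pm * ennreal Pm"
    by (intro mult_mono power_mono qle) auto
  have K0: "0 \<le> K" unfolding K_def by simp
  have "ennreal (lines_size G ^ 4) \<le> ennreal K * ennreal (lines_M G) * (ennreal Pm ^ 2 * ennreal Pm * ennreal Pm * ennreal Pm * ennreal Pm * ennreal Pm)"
  proof -
    have "ennreal (lines_size G ^ 4) = ennreal (lines_size G) ^ 4"
      unfolding lines_size_def by (simp add: ennreal_power)
    also have "\<dots> \<le> ennreal K * ennreal (lines_M G) * (emeasure lborel (Q t0)^2 * emeasure lborel (Q t1) * emeasure lborel (Q t1')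
       * emeasure lborel (Q tinf) * emeasure lborel (Q t2) * emeasure lborel (Q t2'))"
      using main unfolding LHS Mr .
    also have "\<dots> \<le> ennreal K * ennreal (lines_M G) * (ennreal Pm ^ 2 * ennreal Pm * ennreal Pm * ennreal Pm * ennreal Pm * ennreal Pm)"
      by (rule mult_left_mono[OF prodle]) simp
    finally show ?thesis .
  qed
  also have "\<dots> = ennreal (K * lines_M G * Pm ^ 7)"
  proof -
    have p7: "ennreal Pm ^ 2 * ennreal Pm * ennreal Pm * ennreal Pm * ennreal Pm * ennreal Pm = ennreal Pm ^ 7"
      by (simp add: eval_nat_numeral mult_ac)
    have M0: "0 \<le> lines_M G" unfolding lines_M_def by simp
    show ?thesis unfolding p7 using K0 Pm0 M0 by (simp add: ennreal_power ennreal_mult)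
  qed
  finally have fin: "ennreal (lines_size G ^ 4) \<le> ennreal (K * lines_M G * Pm ^ 7)" .
  have M0: "0 \<le> lines_M G" unfolding lines_M_def by simp
  have a: "lines_size G ^ 4 \<le> K * lines_M G * Pm ^ 7"
    using fin K0 Pm0 M0 by (subst (asm) ennreal_le_iff) auto
  have b: "K = Dcoef CARD('n) t1 t2 * Dcoef CARD('n) t0 tinf * Dcoef CARD('n) t1' t0 * Dcoef CARD('n) t2' t0"
    unfolding K_def by (rule const_eq[OF d1 d1' ha hb hc])
  show ?thesis unfolding Pm_def[symmetric] using a unfolding b by (simp only: mult_1_left mult.assoc)
qed

theorem corollary4p2:
  shows "\<exists>A::real. \<forall>t1 t1' t2 t2' t0 tinf :: real.
    t1 \<noteq> t2 \<and> t0 \<noteq> tinf \<and> t0 \<noteq> t1 \<and> t0 \<noteq> t1' \<and> t0 \<noteq> t2 \<and> t0 \<noteq> t2' \<and>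
    tinf \<noteq> t1 \<and> tinf \<noteq> t2 \<and>
    ((tinf - t0) * (t1 - t0)) / ((t1 - tinf) * (t1' - t0)) =
      ((tinf - t0) * (t2 - t0)) / ((t2 - tinf) * (t2' - t0)) \<longrightarrow>
    (\<forall>G :: ((real^'n) \<times> real) set set.
       set_of_lines G \<and>
       lines_X G \<in> sets lebesgue \<and> emeasure lebesgue (lines_X G) < \<infinity> \<and>
       (\<forall>\<xi>. lines_fibre G \<xi> \<in> sets lebesgue) \<and> lines_M_ennreal G < \<infinity> \<and>
       (\<forall>t. proj_lines t G \<in> sets lebesgue \<and> emeasure lebesgue (proj_lines t G) < \<infinity>) \<longrightarrow>
       lines_size G ^ 4 \<le>
         A * Dcoef CARD('n) t1 t2 * Dcoef CARD('n) t0 tinf * Dcoef CARD('n) t1' t0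
           * Dcoef CARD('n) t2' t0 * lines_M G
           * (MAX t\<in>{tinf, t0, t1, t1', t2, t2'}. measure lebesgue (proj_lines t G)) ^ 7)"
  apply (rule exI[of _ 1])
  apply (intro allI impI)
  apply (elim conjE)
  apply (rule final)
                 apply assumption+
  done

end
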